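(* Let $(X,T)$ be a topological dynamical system, $(x,y)\in X^2$, and $\Delta_X=\{(z,z):z\in X\}$. Let $Z=\overline{\{(T^nx,T^ny):n\in\mathbb{Z}_+\}}\subset X^2$. The following are equivalent: (1) $(x,y)$ is Banach proximal; (2) $\operatorname{supp}(Z,T\times T)\subset\Delta_X$; (3) $Z\subset BP(X,T)$.
   Context: A topological dynamical system $(X,T)$ consists of a non-empty compact metric space $(X,d)$ and a continuous map $T:X\to X$. A set $F\subset\mathbb{Z}_+$ has Banach density one if for every $\lambda<1$ there is $N\ge1$ with $\#(F\cap I)\ge\lambda\,\#(I)$ for every interval of integers $I\subset\mathbb{Z}_+$ with $\#(I)\ge N$. A pair $(x,y)$ is Banach proximal if for every $\varepsilon>0$ the set $\{n\in\mathbb{Z}_+: d(T^nx,T^ny)<\varepsilon\}$ has Banach density one; $BP(X,T)$ is the set of Banach proximal pairs. For a system $(Y,S)$, $M(Y,S)$ is the set of $S$-invariant Borel probability measures and $\operatorname{supp}(Y,S)$ is the smallest closed set $C\subset Y$ with $\mu(C)=1$ for all $\mu\in M(Y,S)$. *)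

theory Defs
  imports "HOL-Probability.Probability"
begin

definition tds :: "'a::metric_space set \<Rightarrow> ('a \<Rightarrow> 'a) \<Rightarrow> bool" where
  "tds X T \<longleftrightarrow> X \<noteq> {} \<and> compact X \<and> continuous_on X T \<and> T ` X \<subseteq> X"

text \<open>Banach density one; intervals of integers in Z_+ with at least N elements
  are exactly the sets {a..<a+n} with n >= N.\<close>
definition banach_density_one :: "nat set \<Rightarrow> bool" where
  "banach_density_one F \<longleftrightarrow>
     (\<forall>c::real. c < 1 \<longrightarrow> (\<exists>N\<ge>1. \<forall>a n. n \<ge> N \<longrightarrow>
        real (card (F \<inter> {a..<a+n})) \<ge> c * real n))"

definition banach_proximal :: "('a::metric_space \<Rightarrow> 'a) \<Rightarrow> 'a \<Rightarrow> 'a \<Rightarrow> bool" where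
  "banach_proximal T x y \<longleftrightarrow>
     (\<forall>\<epsilon>>0. banach_density_one {n. dist ((T ^^ n) x) ((T ^^ n) y) < \<epsilon>})"

definition BP :: "'a::metric_space set \<Rightarrow> ('a \<Rightarrow> 'a) \<Rightarrow> ('a \<times> 'a) set" where
  "BP X T = {(x, y). x \<in> X \<and> y \<in> X \<and> banach_proximal T x y}"

definition inv_measures :: "'b::topological_space set \<Rightarrow> ('b \<Rightarrow> 'b) \<Rightarrow> 'b measure set" where
  "inv_measures Y S = {\<mu>. prob_space \<mu> \<and> sets \<mu> = sets (restrict_space borel Y) \<and>
      S \<in> measurable \<mu> \<mu> \<and> (\<forall>A\<in>sets \<mu>. emeasure \<mu> (S -` A \<inter> Y) = emeasure \<mu> A)}"

text \<open>supp(Y,S): smallest closed subset of Y of full measure for all invariant measures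
  (realised as the intersection of all such sets).\<close>
definition supp_sys :: "'b::topological_space set \<Rightarrow> ('b \<Rightarrow> 'b) \<Rightarrow> 'b set" where
  "supp_sys Y S = \<Inter>{C. closed C \<and> C \<subseteq> Y \<and> (\<forall>\<mu>\<in>inv_measures Y S. emeasure \<mu> C = 1)}"

end

theory Submission
  imports Defs
begin


lemma closed_approx:
  fixes M :: "'b::metric_space measure" and C :: "'b set"
  assumes fm: "finite_measure M" and Cs: "C \<in> sets M" and cl: "closed C" and ne: "C \<noteq> {}"
    and meas: "(\<lambda>z. infdist z C) \<in> borel_measurable M"
  shows "(\<lambda>j. \<integral>z. max 0 (1 - real j * infdist z C) \<partial>M) \<longlonglongrightarrow> measure M C"
proof -
  interpret finite_measure M by fact
  have "(\<lambda>j. \<integral>z. max 0 (1 - real j * infdist z C) \<partial>M) \<longlonglongrightarrow> (\<integral>z. indicator C z \<partial>M)"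
  proof (rule integral_dominated_convergence[where w="\<lambda>_. 1"])
    show "(indicator C :: 'b \<Rightarrow> real) \<in> borel_measurable M" using Cs by simp
    show "(\<lambda>z. max 0 (1 - real j * infdist z C)) \<in> borel_measurable M" for j
      using meas by measurable
    show "integrable M (\<lambda>_. 1::real)" by simp
    show "AE z in M. (\<lambda>j. max 0 (1 - real j * infdist z C)) \<longlonglongrightarrow> indicator C z"
    proof (rule AE_I2)
      fix z
      show "(\<lambda>j. max 0 (1 - real j * infdist z C)) \<longlonglongrightarrow> indicator C z"
      proof (cases "z \<in> C")
        case True
        then have "infdist z C = 0" using in_closed_iff_infdist_zero[OF cl ne] by simp
        then show ?thesis using True by simp
      next
        case False
        then have pos: "infdist z C > 0" using in_closed_iff_infdist_zero[OF cl ne] infdist_nonneg[of z C]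
          by (simp add: order_less_le)
        obtain N :: nat where N: "real N > 1 / infdist z C" using reals_Archimedean2 by blast
        have "\<forall>j\<ge>N. max 0 (1 - real j * infdist z C) = 0"
        proof (intro allI impI)
          fix j assume "j \<ge> N"
          then have "real j * infdist z C \<ge> real N * infdist z C" using pos by (simp add: mult_right_mono)
          moreover have "real N * infdist z C > 1" using N pos by (simp add: field_simps)
          ultimately show "max 0 (1 - real j * infdist z C) = 0" by simp
        qed
        then have "eventually (\<lambda>j. max 0 (1 - real j * infdist z C) = 0) sequentially"
          by (auto simp: eventually_sequentially)
        then show ?thesis using False by (simp add: tendsto_eventually)
      qed
    qed
    show "AE z in M. norm (max 0 (1 - real j * infdist z C)) \<le> 1" for j
      by (rule AE_I2) (auto simp: infdist_nonneg)
  qed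
  then show ?thesis using Cs by simp
qed



lemma sets_borel_closed: "sets borel = sigma_sets UNIV {S. closed S}"
  unfolding sets_borel
proof (rule sigma_sets_eqI)
  fix a :: "'a set" assume "a \<in> {S. open S}"
  then have "UNIV - (- a) \<in> sigma_sets UNIV {S. closed S}"
    by (intro sigma_sets.Compl sigma_sets.Basic) auto
  then show "a \<in> sigma_sets UNIV {S. closed S}" by simp
next
  fix a :: "'a set" assume "a \<in> {S. closed S}"
  then have "UNIV - (- a) \<in> sigma_sets UNIV {S. open S}"
    by (intro sigma_sets.Compl sigma_sets.Basic) (auto simp: open_Compl)
  then show "a \<in> sigma_sets UNIV {S. open S}" by simp
qed

lemma measure_eq_by_continuous:
  fixes M N :: "'b::metric_space measure" and Z :: "'b set"
  assumes Zc: "closed Z"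
    and sM: "sets M = sets (restrict_space borel Z)" and sN: "sets N = sets (restrict_space borel Z)"
    and fM: "finite_measure M" and fN: "finite_measure N"
    and eq: "\<And>f::'b\<Rightarrow>real. continuous_on UNIV f \<Longrightarrow> (\<And>z. 0 \<le> f z \<and> f z \<le> 1) \<Longrightarrow>
                 (\<integral>z. f z \<partial>M) = (\<integral>z. f z \<partial>N)"
  shows "M = N"
proof -
  interpret M: finite_measure M by fact
  interpret N: finite_measure N by fact
  define E where "E = (\<inter>) Z ` {S. closed S}"
  have sE: "sets (restrict_space borel Z) = sigma_sets Z E"
  proof -
    have "sets (restrict_space borel Z) = (\<inter>) Z ` sigma_sets UNIV {S. closed S}"
      by (simp add: sets_restrict_space sets_borel_closed)
    also have "\<dots> = sigma_sets Z E" unfolding E_def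
      by (rule sigma_sets_Int) (use Zc in auto)
    finally show ?thesis .
  qed
  have closedE: "closed X" if "X \<in> E" for X using that Zc unfolding E_def by auto
  have subE: "X \<subseteq> Z" if "X \<in> E" for X using that unfolding E_def by auto
  show ?thesis
  proof (rule measure_eqI_generator_eq[where E=E and \<Omega>=Z and A="\<lambda>_. Z"])
    show "Int_stable E" unfolding E_def Int_stable_def
    proof (clarify)
      fix a b :: "'b set" assume "closed a" "closed b"
      have "Z \<inter> a \<inter> (Z \<inter> b) = Z \<inter> (a \<inter> b)" by auto
      then show "Z \<inter> a \<inter> (Z \<inter> b) \<in> (\<inter>) Z ` {S. closed S}"
        using \<open>closed a\<close> \<open>closed b\<close> by auto
    qed
    show "E \<subseteq> Pow Z" using subE by auto
    show "sets M = sigma_sets Z E" using sM sE by simp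
    show "sets N = sigma_sets Z E" using sN sE by simp
    show "range (\<lambda>_. Z) \<subseteq> E" unfolding E_def using Zc by auto
    show "(\<Union>i. Z) = Z" by simp
    show "emeasure M Z \<noteq> \<infinity>" by simp
    fix X assume XE: "X \<in> E"
    show "emeasure M X = emeasure N X"
    proof (cases "X = {}")
      case True then show ?thesis by simp
    next
      case False
      have XsM: "X \<in> sets M" and XsN: "X \<in> sets N"
        using XE sM sN sE by auto
      have mM: "(\<lambda>z. infdist z X) \<in> borel_measurable M"
        unfolding measurable_cong_sets[OF sM refl]
        by (rule measurable_restrict_space1) (intro borel_measurable_continuous_onI continuous_intros)
      have mN: "(\<lambda>z. infdist z X) \<in> borel_measurable N"
        unfolding measurable_cong_sets[OF sN refl]
        by (rule measurable_restrict_space1) (intro borel_measurable_continuous_onI continuous_intros)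
      have lM: "(\<lambda>j. \<integral>z. max 0 (1 - real j * infdist z X) \<partial>M) \<longlonglongrightarrow> measure M X"
        by (rule closed_approx[OF fM XsM closedE[OF XE] False mM])
      have lN: "(\<lambda>j. \<integral>z. max 0 (1 - real j * infdist z X) \<partial>N) \<longlonglongrightarrow> measure N X"
        by (rule closed_approx[OF fN XsN closedE[OF XE] False mN])
      have "(\<lambda>j. \<integral>z. max 0 (1 - real j * infdist z X) \<partial>M) = (\<lambda>j. \<integral>z. max 0 (1 - real j * infdist z X) \<partial>N)"
      proof
        fix j
        show "(\<integral>z. max 0 (1 - real j * infdist z X) \<partial>M) = (\<integral>z. max 0 (1 - real j * infdist z X) \<partial>N)"
          by (rule eq) (auto intro!: continuous_intros simp: infdist_nonneg)
      qed
      with lM lN have "measure M X = measure N X" using LIMSEQ_unique by metis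
      then show ?thesis by (simp add: M.emeasure_eq_measure N.emeasure_eq_measure)
    qed
  qed
qed



lemma geom3_sums: "(\<lambda>s. 1 / 3 ^ s :: real) sums (3/2)"
proof -
  have "(\<lambda>s. (1/3::real) ^ s) sums (1 / (1 - 1/3))" by (rule geometric_sums) simp
  then show ?thesis by (simp add: power_one_over)
qed

lemma tern_summable:
  fixes d :: "nat \<Rightarrow> real"
  assumes "\<And>s. \<bar>d s\<bar> \<le> 1"
  shows "summable (\<lambda>s. d s / 3 ^ s)"
proof (rule summable_comparison_test[OF _ sums_summable[OF geom3_sums]])
  show "\<exists>N. \<forall>n\<ge>N. norm (d n / 3 ^ n) \<le> 1 / 3 ^ n"
    using assms by (auto simp: abs_divide divide_right_mono)
qed

lemma tern_sep:
  fixes d :: "nat \<Rightarrow> real"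
  assumes b: "\<And>s. \<bar>d s\<bar> \<le> 1" and z: "\<And>s. s < t \<Longrightarrow> d s = 0" and o: "\<bar>d t\<bar> = 1"
  shows "\<bar>\<Sum>s. d s / 3 ^ s\<bar> \<ge> 1 / (2 * 3 ^ t)"
proof -
  have sm: "summable (\<lambda>s. d s / 3 ^ s)" by (rule tern_summable[OF b])
  have split: "(\<Sum>s. d s / 3 ^ s) = (\<Sum>s. d (s + Suc t) / 3 ^ (s + Suc t)) + (\<Sum>s<Suc t. d s / 3 ^ s)"
    by (rule suminf_split_initial_segment[OF sm])
  have head: "(\<Sum>s<Suc t. d s / 3 ^ s) = d t / 3 ^ t"
    using z by (simp add: lessThan_Suc)
  have sm2: "summable (\<lambda>s. 1 / 3 ^ (s + Suc t) :: real)"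
    using sums_summable[OF geom3_sums] by (rule summable_ignore_initial_segment)
  have geo: "(\<Sum>s. 1 / 3 ^ (s + Suc t) :: real) = 1 / (2 * 3 ^ t)"
  proof -
    have "(\<lambda>s. (1 / 3 ^ Suc t) * (1 / 3 ^ s) :: real) sums ((1 / 3 ^ Suc t) * (3/2))"
      by (rule sums_mult[OF geom3_sums])
    then have "(\<lambda>s. 1 / 3 ^ (s + Suc t) :: real) sums (1 / (2 * 3 ^ t))"
      by (simp add: power_add field_simps)
    then show ?thesis by (rule sums_unique[symmetric])
  qed
  have tail: "\<bar>\<Sum>s. d (s + Suc t) / 3 ^ (s + Suc t)\<bar> \<le> 1 / (2 * 3 ^ t)"
  proof -
    have "\<bar>\<Sum>s. d (s + Suc t) / 3 ^ (s + Suc t)\<bar> \<le> (\<Sum>s. 1 / 3 ^ (s + Suc t))"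
      using norm_suminf_le[of "\<lambda>s. d (s + Suc t) / 3 ^ (s + Suc t)" "\<lambda>s. 1 / 3 ^ (s + Suc t)"] sm2 b
      by (auto simp: abs_divide divide_right_mono)
    then show ?thesis using geo by simp
  qed
  have c: "\<bar>d t / 3 ^ t\<bar> = 2 * (1 / (2 * 3 ^ t))" using o by (simp add: abs_divide)
  have gen: "\<And>A B c e::real. A = B + c \<Longrightarrow> \<bar>c\<bar> = 2 * e \<Longrightarrow> \<bar>B\<bar> \<le> e \<Longrightarrow> \<bar>A\<bar> \<ge> e"
    by linarith
  show ?thesis by (rule gen[OF split[unfolded head] c tail])
qed



lemma real_coding:
  fixes Z :: "'b::metric_space set"
  assumes cZ: "compact Z"
  obtains G :: "'b \<Rightarrow> real" where "\<And>z. 0 \<le> G z" "\<And>z. G z \<le> 2"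
    "\<And>e. e > 0 \<Longrightarrow> \<exists>d>0. \<forall>z\<in>Z. \<forall>z'\<in>Z. \<bar>G z - G z'\<bar> < d \<longrightarrow> dist z z' < e"
proof (cases "Z = {}")
  case True
  show ?thesis by (rule that[of "\<lambda>_. 0"]) (auto simp: True)
next
  case False
  have "\<forall>l::nat. \<exists>k. finite k \<and> k \<subseteq> Z \<and> Z \<subseteq> (\<Union>x\<in>k. ball x (1 / (real l + 1)))"
    using seq_compact_imp_totally_bounded[OF compact_imp_seq_compact[OF cZ]] by simp
  then obtain P where P: "\<And>l. finite (P l)" "\<And>l. P l \<subseteq> Z"
      "\<And>l. Z \<subseteq> (\<Union>x\<in>P l. ball x (1 / (real l + 1)))"
    by metis
  define A where "A = (\<Union>l. (\<lambda>p. (p, l)) ` P l)"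
  have cA: "countable A" unfolding A_def using P(1) by (intro countable_UN) (auto intro: countable_finite)
  have "P 0 \<noteq> {}" using P(3)[of 0] False by auto
  then have neA: "A \<noteq> {}" unfolding A_def by auto
  define en where "en t = from_nat_into A t" for t
  define bit where "bit t z = (if dist z (fst (en t)) < 1 / (real (snd (en t)) + 1) then 1 else 0 :: real)" for t z
  define G where "G z = (\<Sum>t. bit t z / 3 ^ t)" for z
  have bit01: "bit t z = 0 \<or> bit t z = 1" for t z unfolding bit_def by auto
  have bitabs: "\<bar>bit t z\<bar> \<le> 1" for t z unfolding bit_def by auto
  have sm: "summable (\<lambda>t. bit t z / 3 ^ t)" for z by (rule tern_summable[OF bitabs])
  have G0: "0 \<le> G z" for z unfolding G_def
    by (rule suminf_nonneg[OF sm]) (auto simp: bit_def)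
  have G2: "G z \<le> 2" for z
  proof -
    have "G z \<le> (\<Sum>t. 1 / 3 ^ t)" unfolding G_def
      by (rule suminf_le[OF _ sm sums_summable[OF geom3_sums]]) (auto simp: bit_def divide_right_mono)
    also have "\<dots> = 3/2" using geom3_sums sums_unique by metis
    finally show ?thesis by simp
  qed
  have main: "\<exists>d>0. \<forall>z\<in>Z. \<forall>z'\<in>Z. \<bar>G z - G z'\<bar> < d \<longrightarrow> dist z z' < e" if "e > 0" for e
  proof -
    obtain l :: nat where l: "2 / e < real l + 1"
      using reals_Archimedean2[of "2/e"] by (metis add.commute add_strict_increasing zero_less_one less_eq_real_def)
    have le: "2 / (real l + 1) < e" using l that by (simp add: field_simps)
    define Tset where "Tset = to_nat_on A ` ((\<lambda>p. (p, l)) ` P l)"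
    define T where "T = Max Tset"
    have fT: "finite Tset" unfolding Tset_def using P(1) by simp
    define d :: real where "d = 1 / (2 * 3 ^ T)"
    have dpos: "d > 0" unfolding d_def by simp
    show ?thesis
    proof (intro exI[of _ d] conjI dpos ballI impI)
      fix z z' assume z: "z \<in> Z" and z': "z' \<in> Z" and lt: "\<bar>G z - G z'\<bar> < d"
      have agree: "bit t z = bit t z'" if "t \<le> T" for t
      proof (rule ccontr)
        assume ne: "bit t z \<noteq> bit t z'"
        define t0 where "t0 = (LEAST s. bit s z \<noteq> bit s z')"
        have t0ne: "bit t0 z \<noteq> bit t0 z'" unfolding t0_def by (rule LeastI[of _ t]) (rule ne)
        have t0le: "t0 \<le> t" unfolding t0_def by (rule Least_le) (rule ne)
        have t0less: "bit s z = bit s z'" if "s < t0" for s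
          using not_less_Least[of s "\<lambda>s. bit s z \<noteq> bit s z'"] that unfolding t0_def by blast
        define dd where "dd s = bit s z - bit s z'" for s
        have "G z - G z' = (\<Sum>s. dd s / 3 ^ s)"
          unfolding G_def dd_def diff_divide_distrib using suminf_diff[OF sm[of z] sm[of z']] by simp
        moreover have "\<bar>\<Sum>s. dd s / 3 ^ s\<bar> \<ge> 1 / (2 * 3 ^ t0)"
        proof (rule tern_sep)
          show "\<bar>dd s\<bar> \<le> 1" for s unfolding dd_def using bit01[of s z] bit01[of s z'] by auto
          show "dd s = 0" if "s < t0" for s unfolding dd_def using t0less[OF that] by simp
          show "\<bar>dd t0\<bar> = 1" unfolding dd_def using bit01[of t0 z] bit01[of t0 z'] t0ne by auto
        qed
        moreover have "1 / (2 * 3 ^ T) \<le> 1 / (2 * (3::real) ^ t0)"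
          using t0le that by (intro divide_left_mono mult_left_mono power_increasing) auto
        ultimately show False using lt unfolding d_def by linarith
      qed
      obtain p where p: "p \<in> P l" "z \<in> ball p (1 / (real l + 1))" using P(3) z by blast
      define t where "t = to_nat_on A (p, l)"
      have pA: "(p, l) \<in> A" unfolding A_def using p by auto
      have ent: "en t = (p, l)" unfolding en_def t_def using from_nat_into_to_nat_on[OF cA pA] .
      have "t \<in> Tset" unfolding Tset_def t_def using p by auto
      then have "t \<le> T" unfolding T_def using fT by simp
      then have "bit t z = bit t z'" by (rule agree)
      moreover have "bit t z = 1" unfolding bit_def ent using p by (simp add: dist_commute)
      ultimately have "dist z' p < 1 / (real l + 1)"
        unfolding bit_def ent by (auto split: if_splits)
      then have "dist z z' < 2 / (real l + 1)"
        using p dist_triangle[of z z' p] by (simp add: dist_commute)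
      then show "dist z z' < e" using le by simp
    qed
  qed
  show ?thesis by (rule that[of G]) (use G0 G2 main in auto)
qed



lemma coding_extension:
  fixes Z :: "'b::metric_space set" and G :: "'b \<Rightarrow> real"
  assumes cZ: "compact Z"
    and uc: "\<And>e. e > 0 \<Longrightarrow> \<exists>d>0. \<forall>z\<in>Z. \<forall>z'\<in>Z. \<bar>G z - G z'\<bar> < d \<longrightarrow> dist z z' < e"
  obtains \<psi> where "continuous_on (closure (G ` Z)) \<psi>" "\<psi> ` closure (G ` Z) \<subseteq> Z"
    "\<And>z. z \<in> Z \<Longrightarrow> \<psi> (G z) = z"
proof -
  define K where "K = closure (G ` Z)"
  define \<Phi> where "\<Phi> r z \<longleftrightarrow> z \<in> Z \<and> (\<forall>e>0. \<exists>\<delta>>0. \<forall>z'\<in>Z. \<bar>G z' - r\<bar> < \<delta> \<longrightarrow> dist z' z \<le> e)" for r z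
  have approach: "\<exists>z'\<in>Z. \<bar>G z' - r\<bar> < e" if "r \<in> K" "e > 0" for r e
    using that unfolding K_def closure_approachable by (auto simp: dist_real_def)
  have ex: "\<exists>z. \<Phi> r z" if r: "r \<in> K" for r
  proof -
    obtain xs where xs: "\<And>n. xs n \<in> G ` Z" "xs \<longlonglongrightarrow> r"
      using r unfolding K_def closure_sequential by blast
    define zs where "zs n = inv_into Z G (xs n)" for n
    have zs: "\<And>n. zs n \<in> Z" "(\<lambda>n. G (zs n)) \<longlonglongrightarrow> r"
      using xs by (auto simp: zs_def inv_into_into f_inv_into_f[of _ G Z])
    have "Cauchy zs"
    proof (rule metric_CauchyI)
      fix e :: real assume "e > 0"
      then obtain d where d: "d > 0" "\<forall>z\<in>Z. \<forall>z'\<in>Z. \<bar>G z - G z'\<bar> < d \<longrightarrow> dist z z' < e" using uc by blast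
      have "Cauchy (\<lambda>n. G (zs n))" using zs(2) by (rule LIMSEQ_imp_Cauchy)
      then obtain M where M: "\<forall>m\<ge>M. \<forall>n\<ge>M. dist (G (zs m)) (G (zs n)) < d"
        using d(1) metric_CauchyD by blast
      show "\<exists>M. \<forall>m\<ge>M. \<forall>n\<ge>M. dist (zs m) (zs n) < e"
        using M d(2) zs(1) unfolding dist_real_def by blast
    qed
    then obtain z where z: "z \<in> Z" "zs \<longlonglongrightarrow> z"
      using compact_imp_complete[OF cZ] zs(1) unfolding complete_def by blast
    have "\<Phi> r z" unfolding \<Phi>_def
    proof (intro conjI z(1) allI impI)
      fix e :: real assume e: "e > 0"
      then obtain d where d: "d > 0" "\<forall>z\<in>Z. \<forall>z'\<in>Z. \<bar>G z - G z'\<bar> < d \<longrightarrow> dist z z' < e/2"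
        using uc[of "e/2"] by auto
      have "eventually (\<lambda>n. dist (G (zs n)) r < d/2 \<and> dist (zs n) z < e/2) sequentially"
        using zs(2) z(2) d(1) e by (intro eventually_conj tendstoD) auto
      then obtain n where n: "\<bar>G (zs n) - r\<bar> < d/2" "dist (zs n) z < e/2"
        by (auto simp: eventually_sequentially dist_real_def)
      show "\<exists>\<delta>>0. \<forall>z'\<in>Z. \<bar>G z' - r\<bar> < \<delta> \<longrightarrow> dist z' z \<le> e"
      proof (intro exI[of _ "d/2"] conjI ballI impI)
        show "d/2 > 0" using d by simp
        fix z' assume z': "z' \<in> Z" "\<bar>G z' - r\<bar> < d/2"
        then have "\<bar>G z' - G (zs n)\<bar> < d" using n by linarith
        then have "dist z' (zs n) < e/2" using d(2) z' zs(1) by blast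
        then show "dist z' z \<le> e" using n(2) dist_triangle[of z' z "zs n"] by linarith
      qed
    qed
    then show ?thesis by blast
  qed
  have uniq: "z1 = z2" if "r \<in> K" "\<Phi> r z1" "\<Phi> r z2" for r z1 z2
  proof -
    have de: "dist z1 z2 \<le> 2 * e" if e: "e > 0" for e
    proof -
      obtain d1 where d1: "d1 > 0" "\<forall>z'\<in>Z. \<bar>G z' - r\<bar> < d1 \<longrightarrow> dist z' z1 \<le> e"
        using \<open>\<Phi> r z1\<close> e unfolding \<Phi>_def by blast
      obtain d2 where d2: "d2 > 0" "\<forall>z'\<in>Z. \<bar>G z' - r\<bar> < d2 \<longrightarrow> dist z' z2 \<le> e"
        using \<open>\<Phi> r z2\<close> e unfolding \<Phi>_def by blast
      obtain z' where z': "z' \<in> Z" "\<bar>G z' - r\<bar> < min d1 d2"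
        using approach[OF \<open>r \<in> K\<close>, of "min d1 d2"] d1 d2 by auto
      have "dist z' z1 \<le> e" "dist z' z2 \<le> e" using z' d1 d2 by auto
      then show ?thesis using dist_triangle[of z1 z2 z'] dist_commute[of z' z1] by linarith
    qed
    show ?thesis
    proof (rule ccontr)
      assume "z1 \<noteq> z2"
      then have pos: "dist z1 z2 > 0" by simp
      have "dist z1 z2 \<le> 2 * (dist z1 z2 / 4)" using pos by (intro de) simp
      then show False using pos by linarith
    qed
  qed
  define \<psi> where "\<psi> r = (SOME z. \<Phi> r z)" for r
  have \<psi>\<Phi>: "\<Phi> r (\<psi> r)" if "r \<in> K" for r unfolding \<psi>_def using ex[OF that] by (rule someI_ex)
  show ?thesis
  proof (rule that)
    show "\<psi> ` closure (G ` Z) \<subseteq> Z"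
    proof
      fix y assume "y \<in> \<psi> ` closure (G ` Z)"
      then obtain r where r: "r \<in> K" "y = \<psi> r" unfolding K_def by blast
      show "y \<in> Z" using \<psi>\<Phi>[OF r(1)] r(2) unfolding \<Phi>_def by blast
    qed
    show "\<psi> (G z) = z" if z: "z \<in> Z" for z
    proof -
      have "G z \<in> G ` Z" using z by (rule imageI)
      then have GK: "G z \<in> K" unfolding K_def using closure_subset by (rule subsetD[rotated])
      have "\<Phi> (G z) z" unfolding \<Phi>_def
      proof (intro conjI z allI impI)
        fix e :: real assume "e > 0"
        then obtain d where d: "d > 0" "\<forall>z\<in>Z. \<forall>z'\<in>Z. \<bar>G z - G z'\<bar> < d \<longrightarrow> dist z z' < e" using uc by blast
        show "\<exists>\<delta>>0. \<forall>z'\<in>Z. \<bar>G z' - G z\<bar> < \<delta> \<longrightarrow> dist z' z \<le> e"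
        proof (intro exI[of _ d] conjI ballI impI)
          fix z' assume a: "z' \<in> Z" "\<bar>G z' - G z\<bar> < d"
          have "dist z' z < e" using d(2) z a by blast
          then show "dist z' z \<le> e" by simp
        qed (rule d(1))
      qed
      then show ?thesis by (rule uniq[OF GK \<psi>\<Phi>[OF GK]])
    qed
    show "continuous_on (closure (G ` Z)) \<psi>"
      unfolding K_def[symmetric] continuous_on_iff
    proof (intro ballI allI impI)
      fix r e assume r: "r \<in> K" and e: "(0::real) < e"
      have e3: "e/3 > 0" using e by simp
      obtain d where d: "d > 0" "\<forall>z'\<in>Z. \<bar>G z' - r\<bar> < d \<longrightarrow> dist z' (\<psi> r) \<le> e/3"
        using \<psi>\<Phi>[OF r] e3 unfolding \<Phi>_def by blast
      show "\<exists>d>0. \<forall>r'\<in>K. dist r' r < d \<longrightarrow> dist (\<psi> r') (\<psi> r) < e"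
      proof (intro exI[of _ "d/2"] conjI ballI impI)
        show "d/2 > 0" using d by simp
        fix r' assume r': "r' \<in> K" "dist r' r < d/2"
        obtain d' where d': "d' > 0" "\<forall>z'\<in>Z. \<bar>G z' - r'\<bar> < d' \<longrightarrow> dist z' (\<psi> r') \<le> e/3"
          using \<psi>\<Phi>[OF r'(1)] e3 unfolding \<Phi>_def by blast
        obtain z' where z': "z' \<in> Z" "\<bar>G z' - r'\<bar> < min d' (d/2)"
          using approach[OF r'(1), of "min d' (d/2)"] d d' by auto
        have h1: "\<bar>G z' - r'\<bar> < d/2" using z'(2) by simp
        have h2: "\<bar>r' - r\<bar> < d/2" using r'(2) by (simp add: dist_real_def)
        have "\<bar>G z' - r\<bar> < d" using h1 h2 by linarith
        then have "dist z' (\<psi> r) \<le> e/3" using d z' by blast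
        moreover have "dist z' (\<psi> r') \<le> e/3" using d' z' by auto
        ultimately show "dist (\<psi> r') (\<psi> r) < e"
          using dist_triangle[of "\<psi> r'" "\<psi> r" z'] dist_commute[of z' "\<psi> r'"] e by linarith
      qed
    qed
  qed
qed



lemma KB:
  fixes Z :: "'b::metric_space set" and S :: "'b \<Rightarrow> 'b" and w :: "nat \<Rightarrow> 'b"
    and a n :: "nat \<Rightarrow> nat" and F :: "'b set" and \<delta> :: real
  assumes cZ: "compact Z" and Sc: "continuous_on Z S" and SZ: "S ` Z \<subseteq> Z"
    and wZ: "\<And>m. w m \<in> Z" and wS: "\<And>m. S (w m) = w (Suc m)"
    and nge: "\<And>k. Suc k \<le> n k"
    and Fc: "closed F" and FZ: "F \<subseteq> Z"
    and cnt: "\<And>k. \<delta> * real (n k) \<le> real (card {m \<in> {a k..<a k + n k}. w m \<in> F})"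
  shows "\<exists>\<mu>. prob_space \<mu> \<and> sets \<mu> = sets (restrict_space borel Z) \<and> S \<in> measurable \<mu> \<mu> \<and>
           (\<forall>A\<in>sets \<mu>. emeasure \<mu> (S -` A \<inter> Z) = emeasure \<mu> A) \<and> measure \<mu> F \<ge> \<delta>"
proof -
  have Zne: "Z \<noteq> {}" using wZ by blast
  have Zcl: "closed Z" using cZ by (rule compact_imp_closed)
  obtain G :: "'b \<Rightarrow> real" where G0: "\<And>z. 0 \<le> G z" and G2: "\<And>z. G z \<le> 2"
    and Guc: "\<And>e. e > 0 \<Longrightarrow> \<exists>d>0. \<forall>z\<in>Z. \<forall>z'\<in>Z. \<bar>G z - G z'\<bar> < d \<longrightarrow> dist z z' < e"
    using real_coding[OF cZ] by metis
  obtain \<psi> where \<psi>c: "continuous_on (closure (G ` Z)) \<psi>" and \<psi>Z: "\<psi> ` closure (G ` Z) \<subseteq> Z"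
    and \<psi>G: "\<And>z. z \<in> Z \<Longrightarrow> \<psi> (G z) = z"
    using coding_extension[OF cZ Guc] by metis
  define K where "K = closure (G ` Z)"
  have Kc: "closed K" unfolding K_def by simp
  have GK: "G z \<in> K" if "z \<in> Z" for z
  proof -
    have "G z \<in> G ` Z" using that by (rule imageI)
    then show ?thesis unfolding K_def using closure_subset by (rule subsetD[rotated])
  qed
  have Kne: "K \<noteq> {}" using GK wZ by blast
  define I where "I k = {a k..<a k + n k}" for k
  have If: "finite (I k)" for k unfolding I_def by simp
  have Ine: "I k \<noteq> {}" for k unfolding I_def using nge[of k] by simp
  have Icard: "card (I k) = n k" for k unfolding I_def by simp
  define avg where "avg k f = (\<Sum>m\<in>I k. f m) / real (n k)" for k and f :: "nat \<Rightarrow> real"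
  define \<nu> where "\<nu> k = distr (measure_pmf (pmf_of_set (I k))) borel (\<lambda>m. G (w m))" for k
  have \<nu>rd: "real_distribution (\<nu> k)" for k
    unfolding \<nu>_def real_distribution_def real_distribution_axioms_def
    by (auto intro!: prob_space.prob_space_distr prob_space_measure_pmf)
  have \<nu>int: "(\<integral>r. h r \<partial>\<nu> k) = avg k (\<lambda>m. h (G (w m)))" if "h \<in> borel_measurable borel" for h k
  proof -
    have "(\<integral>r. h r \<partial>\<nu> k) = (\<integral>m. h (G (w m)) \<partial>measure_pmf (pmf_of_set (I k)))"
      unfolding \<nu>_def by (rule integral_distr) (simp_all add: that)
    also have "\<dots> = avg k (\<lambda>m. h (G (w m)))"
      unfolding avg_def using integral_pmf_of_set[OF Ine If] Icard by simp
    finally show ?thesis .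
  qed
  have tight: "tight \<nu>"
    unfolding tight_def
  proof (intro conjI allI impI)
    show "real_distribution (\<nu> k)" for k by (rule \<nu>rd)
    fix e :: real assume "e > 0"
    have "measure (\<nu> k) {-1<..3} = 1" for k
    proof -
      have "measure (\<nu> k) {-1<..3} = measure (measure_pmf (pmf_of_set (I k))) ((\<lambda>m. G (w m)) -` {-1<..3} \<inter> UNIV)"
        unfolding \<nu>_def by (subst measure_distr) auto
      also have "(\<lambda>m. G (w m)) -` {-1<..3} \<inter> UNIV = UNIV"
      proof -
        have "-1 < G (w m) \<and> G (w m) \<le> 3" for m using G0[of "w m"] G2[of "w m"] by linarith
        then show ?thesis by auto
      qed
      finally show ?thesis by simp
    qed
    then show "\<exists>a b. a < b \<and> (\<forall>k. 1 - e < measure (\<nu> k) {a<..b})"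
      using \<open>e > 0\<close> by (intro exI[of _ "-1"] exI[of _ 3]) auto
  qed
  obtain r \<nu>0 where r: "strict_mono r" and \<nu>0: "real_distribution \<nu>0" and wc: "weak_conv_m (\<nu> \<circ> id \<circ> r) \<nu>0"
    using tight_imp_convergent_subsubsequence[OF tight, of id] by (auto simp: strict_mono_def)
  interpret \<nu>0: real_distribution \<nu>0 by (rule \<nu>0)
  have conv: "(\<lambda>k. avg (r k) (\<lambda>m. h (G (w m)))) \<longlonglongrightarrow> (\<integral>x. h x \<partial>\<nu>0)"
    if hc: "continuous_on UNIV h" and hB: "\<And>x. \<bar>h x\<bar> \<le> B" for h :: "real \<Rightarrow> real" and B
  proof -
    have "(\<lambda>k. integral\<^sup>L ((\<nu> \<circ> id \<circ> r) k) h) \<longlonglongrightarrow> integral\<^sup>L \<nu>0 h"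
      by (rule weak_conv_imp_integral_bdd_continuous_conv[OF _ \<nu>0 wc, of h B])
         (use \<nu>rd hc hB in \<open>auto simp: continuous_on_eq_continuous_at\<close>)
    moreover have "integral\<^sup>L ((\<nu> \<circ> id \<circ> r) k) h = avg (r k) (\<lambda>m. h (G (w m)))" for k
      using \<nu>int[of h "r k"] hc by (simp add: borel_measurable_continuous_onI)
    ultimately show ?thesis by simp
  qed
  have avg_const: "avg k (\<lambda>_. c) = c" for k c
    unfolding avg_def using Icard[of k] nge[of k] by simp
  have hbound: "\<bar>max 0 (1 - real j * infdist x C)\<bar> \<le> 1" for j x and C :: "'c::metric_space set"
    by (simp add: infdist_nonneg)
  have \<nu>0K: "measure \<nu>0 K = 1"
  proof -
    have KS: "K \<in> sets \<nu>0" using Kc by simp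
    have lim: "(\<lambda>j. \<integral>x. max 0 (1 - real j * infdist x K) \<partial>\<nu>0) \<longlonglongrightarrow> measure \<nu>0 K"
    proof (rule closed_approx[OF _ KS Kc Kne])
      show "finite_measure \<nu>0" by (rule \<nu>0.finite_measure_axioms)
      have "(\<lambda>x. infdist x K) \<in> borel_measurable borel"
        by (intro borel_measurable_continuous_onI continuous_intros)
      then show "(\<lambda>x. infdist x K) \<in> borel_measurable \<nu>0" by simp
    qed
    have "(\<integral>x. max 0 (1 - real j * infdist x K) \<partial>\<nu>0) = 1" for j
    proof -
      have "(\<lambda>k. avg (r k) (\<lambda>m. max 0 (1 - real j * infdist (G (w m)) K))) \<longlonglongrightarrow>
              (\<integral>x. max 0 (1 - real j * infdist x K) \<partial>\<nu>0)"
        by (rule conv[OF _ hbound]) (intro continuous_intros)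
      moreover have "avg (r k) (\<lambda>m. max 0 (1 - real j * infdist (G (w m)) K)) = 1" for k
      proof -
        have "max 0 (1 - real j * infdist (G (w m)) K) = 1" for m
          using infdist_zero[OF GK[OF wZ[of m]]] by simp
        then show ?thesis using avg_const by simp
      qed
      ultimately have "(\<lambda>k. 1::real) \<longlonglongrightarrow> (\<integral>x. max 0 (1 - real j * infdist x K) \<partial>\<nu>0)" by simp
      then show ?thesis by (rule LIMSEQ_unique[OF tendsto_const, symmetric])
    qed
    with lim have "(\<lambda>j. 1::real) \<longlonglongrightarrow> measure \<nu>0 K" by simp
    then show ?thesis by (rule LIMSEQ_unique[OF tendsto_const, symmetric])
  qed
  define \<psi>' where "\<psi>' x = (if x \<in> K then \<psi> x else w 0)" for x
  have \<psi>'Z: "\<psi>' x \<in> Z" for x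
  proof (cases "x \<in> K")
    case True then have "\<psi> x \<in> \<psi> ` closure (G ` Z)" unfolding K_def by (rule imageI)
    then have "\<psi> x \<in> Z" by (rule subsetD[OF \<psi>Z])
    then show ?thesis using True unfolding \<psi>'_def by simp
  next
    case False then show ?thesis using wZ unfolding \<psi>'_def by simp
  qed
  have \<psi>'m: "\<psi>' \<in> measurable borel (restrict_space borel Z)"
  proof (rule measurable_restrict_space2)
    show "\<psi>' \<in> space borel \<rightarrow> Z" using \<psi>'Z by auto
    show "\<psi>' \<in> borel_measurable borel" unfolding \<psi>'_def
    proof (rule borel_measurable_continuous_on_if)
      show "K \<in> sets borel" using Kc by simp
      show "continuous_on K \<psi>" using \<psi>c unfolding K_def .
      show "continuous_on (- K) (\<lambda>x. w 0)" by (rule continuous_on_const)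
    qed
  qed
  have \<psi>'m0: "\<psi>' \<in> measurable \<nu>0 (restrict_space borel Z)"
    using \<psi>'m measurable_cong_sets[OF \<nu>0.events_eq_borel refl] by blast
  define \<mu> where "\<mu> = distr \<nu>0 (restrict_space borel Z) \<psi>'"
  have \<mu>ps: "prob_space \<mu>" unfolding \<mu>_def by (rule \<nu>0.prob_space_distr[OF \<psi>'m0])
  interpret \<mu>: prob_space \<mu> by (rule \<mu>ps)
  have s\<mu>: "sets \<mu> = sets (restrict_space borel Z)" unfolding \<mu>_def by simp
  have sp\<mu>: "space \<mu> = Z" unfolding \<mu>_def by (simp add: space_restrict_space)
  have star: "(\<lambda>k. avg (r k) (\<lambda>m. f (w m))) \<longlonglongrightarrow> (\<integral>z. f z \<partial>\<mu>)"
    if fc: "continuous_on Z f" for f :: "'b \<Rightarrow> real"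
  proof -
    obtain B where B: "\<And>z. z \<in> Z \<Longrightarrow> \<bar>f z\<bar> \<le> B"
      using compact_imp_bounded[OF compact_continuous_image[OF fc cZ]] unfolding bounded_iff by auto
    have B0: "0 \<le> B" using B[OF wZ[of 0]] by linarith
    have gc: "continuous_on K (f \<circ> \<psi>)" unfolding K_def
      by (rule continuous_on_compose[OF \<psi>c]) (rule continuous_on_subset[OF fc \<psi>Z])
    obtain h where hc: "continuous_on UNIV h" and hK: "\<And>x. x \<in> K \<Longrightarrow> h x = (f \<circ> \<psi>) x"
      and hB: "\<And>x. norm (h x) \<le> B"
    proof (rule Tietze[OF gc _ B0])
      show "closedin (top_of_set UNIV) K" using Kc by simp
      show "norm ((f \<circ> \<psi>) x) \<le> B" if "x \<in> K" for x
      proof -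
        have "\<psi> x \<in> \<psi> ` closure (G ` Z)" using that unfolding K_def by (rule imageI)
        then have "\<psi> x \<in> Z" by (rule subsetD[OF \<psi>Z])
        then show ?thesis using B by simp
      qed
    qed auto
    have "(\<lambda>k. avg (r k) (\<lambda>m. h (G (w m)))) \<longlonglongrightarrow> (\<integral>x. h x \<partial>\<nu>0)"
      by (rule conv[OF hc]) (use hB in simp)
    moreover have "avg k (\<lambda>m. h (G (w m))) = avg k (\<lambda>m. f (w m))" for k
      using hK[OF GK[OF wZ]] \<psi>G[OF wZ] by simp
    moreover have "(\<integral>x. h x \<partial>\<nu>0) = (\<integral>z. f z \<partial>\<mu>)"
    proof -
      have fm: "f \<in> borel_measurable (restrict_space borel Z)"
        by (rule borel_measurable_continuous_on_restrict[OF fc])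
      have "(\<integral>z. f z \<partial>\<mu>) = (\<integral>x. f (\<psi>' x) \<partial>\<nu>0)"
        unfolding \<mu>_def by (rule integral_distr[OF \<psi>'m0 fm])
      also have "\<dots> = (\<integral>x. h x \<partial>\<nu>0)"
      proof (rule integral_cong_AE)
        show "(\<lambda>x. f (\<psi>' x)) \<in> borel_measurable \<nu>0"
          using measurable_comp[OF \<psi>'m0 fm] by (simp add: comp_def)
        show "h \<in> borel_measurable \<nu>0" using hc by (simp add: borel_measurable_continuous_onI)
        have "AE x in \<nu>0. x \<in> K" by (rule \<nu>0.AE_prob_1[OF \<nu>0K])
        then show "AE x in \<nu>0. f (\<psi>' x) = h x"
          by eventually_elim (simp add: hK \<psi>'_def)
      qed
      finally show ?thesis by simp
    qed
    ultimately show ?thesis by simp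
  qed
  have Sm: "S \<in> measurable (restrict_space borel Z) (restrict_space borel Z)"
  proof (rule measurable_restrict_space2)
    show "S \<in> space (restrict_space borel Z) \<rightarrow> Z" using SZ by (auto simp: space_restrict_space)
    show "S \<in> measurable (restrict_space borel Z) borel"
      by (rule borel_measurable_continuous_on_restrict[OF Sc])
  qed
  have S\<mu>: "S \<in> measurable \<mu> \<mu>" using Sm measurable_cong_sets[OF s\<mu> s\<mu>] by blast
  have S\<mu>': "S \<in> measurable \<mu> (restrict_space borel Z)" using Sm measurable_cong_sets[OF s\<mu> refl] by blast
  have r_ge: "k \<le> r k" for k using seq_suble[OF r] .
  have dist_eq: "distr \<mu> (restrict_space borel Z) S = \<mu>"
  proof (rule measure_eq_by_continuous[OF Zcl])
    show "sets (distr \<mu> (restrict_space borel Z) S) = sets (restrict_space borel Z)" by simp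
    show "sets \<mu> = sets (restrict_space borel Z)" by (rule s\<mu>)
    show "finite_measure (distr \<mu> (restrict_space borel Z) S)"
      by (rule prob_space.finite_measure[OF \<mu>.prob_space_distr[OF S\<mu>']])
    show "finite_measure \<mu>" by (rule \<mu>.finite_measure_axioms)
    fix f :: "'b \<Rightarrow> real" assume fc: "continuous_on UNIV f" and f01: "\<And>z. 0 \<le> f z \<and> f z \<le> 1"
    have fm: "f \<in> borel_measurable (restrict_space borel Z)"
      by (rule measurable_restrict_space1) (rule borel_measurable_continuous_onI[OF fc])
    have "(\<integral>z. f z \<partial>distr \<mu> (restrict_space borel Z) S) = (\<integral>z. f (S z) \<partial>\<mu>)"
      by (rule integral_distr[OF S\<mu>' fm])
    moreover have l1: "(\<lambda>k. avg (r k) (\<lambda>m. f (S (w m)))) \<longlonglongrightarrow> (\<integral>z. f (S z) \<partial>\<mu>)"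
    proof (rule star)
      show "continuous_on Z (\<lambda>z. f (S z))"
        using continuous_on_compose[OF Sc continuous_on_subset[OF fc]] by (simp add: comp_def)
    qed
    moreover have l2: "(\<lambda>k. avg (r k) (\<lambda>m. f (w m))) \<longlonglongrightarrow> (\<integral>z. f z \<partial>\<mu>)"
      by (rule star) (rule continuous_on_subset[OF fc], simp)
    moreover have l3: "(\<lambda>k. avg (r k) (\<lambda>m. f (S (w m))) - avg (r k) (\<lambda>m. f (w m))) \<longlonglongrightarrow> 0"
    proof (rule Lim_null_comparison[OF _ LIMSEQ_inverse_real_of_nat])
      show "\<forall>\<^sub>F k in sequentially. norm (avg (r k) (\<lambda>m. f (S (w m))) - avg (r k) (\<lambda>m. f (w m))) \<le> inverse (real (Suc k))"
      proof (rule always_eventually, rule allI)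
        fix k
        define q where "q = r k"
        have "avg q (\<lambda>m. f (S (w m))) - avg q (\<lambda>m. f (w m)) = (\<Sum>m\<in>I q. f (w (Suc m)) - f (w m)) / real (n q)"
          unfolding avg_def wS by (simp add: sum_subtractf diff_divide_distrib)
        also have "(\<Sum>m\<in>I q. f (w (Suc m)) - f (w m)) = f (w (a q + n q)) - f (w (a q))"
          unfolding I_def by (rule sum_Suc_diff') simp
        finally have eq: "avg q (\<lambda>m. f (S (w m))) - avg q (\<lambda>m. f (w m)) = (f (w (a q + n q)) - f (w (a q))) / real (n q)" .
        have nq: "real (Suc k) \<le> real (n q)" using nge[of q] r_ge[of k] unfolding q_def by simp
        have "\<bar>f (w (a q + n q)) - f (w (a q))\<bar> \<le> 1" using f01[of "w (a q + n q)"] f01[of "w (a q)"] by linarith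
        then have "\<bar>(f (w (a q + n q)) - f (w (a q))) / real (n q)\<bar> \<le> 1 / real (n q)"
          using nq by (simp add: abs_divide divide_right_mono)
        also have "\<dots> \<le> 1 / real (Suc k)" using nq by (intro divide_left_mono) auto
        finally show "norm (avg (r k) (\<lambda>m. f (S (w m))) - avg (r k) (\<lambda>m. f (w m))) \<le> inverse (real (Suc k))"
          using eq unfolding q_def by (simp add: inverse_eq_divide)
      qed
    qed
    ultimately show "(\<integral>z. f z \<partial>distr \<mu> (restrict_space borel Z) S) = (\<integral>z. f z \<partial>\<mu>)"
      using LIMSEQ_unique[OF l3 tendsto_diff[OF l1 l2]] by simp
  qed
  have inv: "\<forall>A\<in>sets \<mu>. emeasure \<mu> (S -` A \<inter> Z) = emeasure \<mu> A"
  proof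
    fix A assume A: "A \<in> sets \<mu>"
    have "emeasure (distr \<mu> (restrict_space borel Z) S) A = emeasure \<mu> (S -` A \<inter> space \<mu>)"
      by (rule emeasure_distr[OF S\<mu>']) (use A s\<mu> in simp)
    then show "emeasure \<mu> (S -` A \<inter> Z) = emeasure \<mu> A" using dist_eq sp\<mu> by simp
  qed
  have mF: "measure \<mu> F \<ge> \<delta>"
  proof (cases "\<delta> \<le> 0")
    case True then show ?thesis using measure_nonneg[of \<mu> F] by linarith
  next
    case False
    have Fne: "F \<noteq> {}"
    proof
      assume "F = {}"
      then have "\<delta> * real (n 0) \<le> 0" using cnt[of 0] by simp
      moreover have "real (n 0) > 0" using nge[of 0] by simp
      ultimately show False using False by (simp add: mult_le_0_iff)
    qed
    have FS: "F \<in> sets \<mu>" unfolding s\<mu> using FZ Fc Zcl by (subst sets_restrict_space_iff) auto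
    have lim: "(\<lambda>j. \<integral>z. max 0 (1 - real j * infdist z F) \<partial>\<mu>) \<longlonglongrightarrow> measure \<mu> F"
    proof (rule closed_approx[OF \<mu>.finite_measure_axioms FS Fc Fne])
      show "(\<lambda>z. infdist z F) \<in> borel_measurable \<mu>"
        unfolding measurable_cong_sets[OF s\<mu> refl]
        by (rule measurable_restrict_space1) (intro borel_measurable_continuous_onI continuous_intros)
    qed
    have "(\<integral>z. max 0 (1 - real j * infdist z F) \<partial>\<mu>) \<ge> \<delta>" for j
    proof -
      define fj where "fj z = max 0 (1 - real j * infdist z F)" for z
      have l: "(\<lambda>k. avg (r k) (\<lambda>m. fj (w m))) \<longlonglongrightarrow> (\<integral>z. fj z \<partial>\<mu>)"
        by (rule star) (unfold fj_def, intro continuous_intros)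
      have ge: "avg k (\<lambda>m. fj (w m)) \<ge> \<delta>" for k
      proof -
        have "(\<Sum>m\<in>I k. fj (w m)) \<ge> (\<Sum>m\<in>I k. if w m \<in> F then 1 else 0)"
        proof (rule sum_mono)
          fix m show "(if w m \<in> F then 1 else 0) \<le> fj (w m)"
            unfolding fj_def using infdist_zero[of "w m" F] by auto
        qed
        also have "(\<Sum>m\<in>I k. if w m \<in> F then 1 else 0) = real (card {m \<in> I k. w m \<in> F})"
          using sum.inter_filter[OF If[of k], of "\<lambda>_. 1::real" "\<lambda>m. w m \<in> F"] by simp
        finally have "\<delta> * real (n k) \<le> (\<Sum>m\<in>I k. fj (w m))" using cnt[of k] unfolding I_def by linarith
        moreover have "real (n k) > 0" using nge[of k] by simp
        ultimately show ?thesis unfolding avg_def by (simp add: field_simps)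
      qed
      show ?thesis unfolding fj_def[symmetric]
        by (rule LIMSEQ_le_const[OF l]) (use ge in blast)
    qed
    then show ?thesis by (intro LIMSEQ_le_const[OF lim]) blast
  qed
  show ?thesis using \<mu>ps s\<mu> S\<mu> inv mF by blast
qed



lemma funpow_mapsto: fixes T :: "'a \<Rightarrow> 'a" shows "T ` X \<subseteq> X \<Longrightarrow> u \<in> X \<Longrightarrow> (T ^^ m) u \<in> X"
  by (induction m) auto

lemma funpow_cont: fixes T :: "'a::topological_space \<Rightarrow> 'a" shows "continuous_on X T \<Longrightarrow> T ` X \<subseteq> X \<Longrightarrow> continuous_on X (T ^^ m)"
proof (induction m)
  case 0 then show ?case by (simp add: continuous_on_id)
next
  case (Suc m)
  have "continuous_on X (T \<circ> (T ^^ m))"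
  proof (rule continuous_on_compose)
    show "continuous_on X (T ^^ m)" using Suc by simp
    have "(T ^^ m) ` X \<subseteq> X" using funpow_mapsto[OF Suc.prems(2)] by auto
    then show "continuous_on ((T ^^ m) ` X) T" using Suc.prems(1) by (rule continuous_on_subset[rotated])
  qed
  then show ?case by simp
qed

lemma funpow_map_prod: "(map_prod T T ^^ m) (u, v) = ((T ^^ m) u, (T ^^ m) v)" for T :: "'a \<Rightarrow> 'a"
  by (induction m) auto

lemma basic:
  fixes X :: "'a::metric_space set" and T :: "'a \<Rightarrow> 'a" and x y :: 'a
  assumes tds: "tds X T" and x: "x \<in> X" and y: "y \<in> X"
  defines "Z \<equiv> closure {((T ^^ n) x, (T ^^ n) y) | n. True}"
  shows "compact Z" "Z \<subseteq> X \<times> X" "continuous_on Z (map_prod T T)" "map_prod T T ` Z \<subseteq> Z"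
    "\<And>m. ((T ^^ m) x, (T ^^ m) y) \<in> Z"
proof -
  have cX: "compact X" and Tc: "continuous_on X T" and TX: "T ` X \<subseteq> X"
    using tds unfolding tds_def by auto
  define Orb where "Orb = {((T ^^ n) x, (T ^^ n) y) | n. True}"
  have ZO: "Z = closure Orb" unfolding Z_def Orb_def ..
  have OX: "Orb \<subseteq> X \<times> X" unfolding Orb_def using funpow_mapsto[OF TX] x y by auto
  have cXX: "compact (X \<times> X)" using compact_Times[OF cX cX] .
  show ZX: "Z \<subseteq> X \<times> X" unfolding ZO
    by (rule closure_minimal[OF OX compact_imp_closed[OF cXX]])
  show cZ: "compact Z"
  proof -
    have "compact (X \<times> X \<inter> closure Orb)" by (rule compact_Int_closed[OF cXX closed_closure])
    moreover have "X \<times> X \<inter> closure Orb = closure Orb" using ZX ZO by blast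
    ultimately show ?thesis using ZO by simp
  qed
  have cS: "continuous_on (X \<times> X) (map_prod T T)"
  proof -
    have "continuous_on (X \<times> X) (\<lambda>p. (T (fst p), T (snd p)))"
      by (intro continuous_on_Pair continuous_on_compose2[OF Tc] continuous_intros) auto
    then show ?thesis by (simp add: map_prod_def case_prod_beta)
  qed
  show cSZ: "continuous_on Z (map_prod T T)" using cS ZX by (rule continuous_on_subset)
  show "map_prod T T ` Z \<subseteq> Z" unfolding ZO
  proof (rule image_closure_subset)
    show "continuous_on (closure Orb) (map_prod T T)" using cSZ ZO by simp
    show "closed (closure Orb)" by simp
    show "map_prod T T ` Orb \<subseteq> closure Orb"
    proof
      fix p assume "p \<in> map_prod T T ` Orb"
      then obtain n where "p = map_prod T T ((T ^^ n) x, (T ^^ n) y)" unfolding Orb_def by auto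
      then have "p = ((T ^^ Suc n) x, (T ^^ Suc n) y)" by simp
      then have "p \<in> Orb" unfolding Orb_def by blast
      then show "p \<in> closure Orb" using closure_subset by (rule subsetD[rotated])
    qed
  qed
  show "((T ^^ m) x, (T ^^ m) y) \<in> Z" for m
  proof -
    have "((T ^^ m) x, (T ^^ m) y) \<in> Orb" unfolding Orb_def by blast
    then show ?thesis unfolding ZO using closure_subset by (rule subsetD[rotated])
  qed
qed



lemma supp_imp_bp:
  fixes X :: "'a::metric_space set" and T :: "'a \<Rightarrow> 'a" and x y :: 'a
  assumes tds: "tds X T" and x: "x \<in> X" and y: "y \<in> X"
  defines "Z \<equiv> closure {((T ^^ n) x, (T ^^ n) y) | n. True}"
  assumes supp: "supp_sys Z (map_prod T T) \<subseteq> {(z, z) | z. z \<in> X}"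
  shows "banach_proximal T x y"
proof (rule ccontr)
  assume nbp: "\<not> banach_proximal T x y"
  note B = basic[OF tds x y, folded Z_def]
  define S where "S = map_prod T T"
  define w where "w m = ((T ^^ m) x, (T ^^ m) y)" for m
  obtain \<epsilon> where \<epsilon>: "\<epsilon> > 0" and nbd: "\<not> banach_density_one {n. dist ((T ^^ n) x) ((T ^^ n) y) < \<epsilon>}"
    using nbp unfolding banach_proximal_def by blast
  define Good where "Good = {n. dist ((T ^^ n) x) ((T ^^ n) y) < \<epsilon>}"
  have "\<exists>c::real. c < 1 \<and> (\<forall>N\<ge>1. \<exists>a n. n \<ge> N \<and> \<not> (real (card (Good \<inter> {a..<a+n})) \<ge> c * real n))"
    using nbd unfolding banach_density_one_def Good_def by blast
  then obtain c :: real where c: "c < 1" and cN: "\<forall>N\<ge>1. \<exists>a n. n \<ge> N \<and> real (card (Good \<inter> {a..<a+n})) < c * real n"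
    by (auto simp: not_le)
  have "\<forall>k. \<exists>a n. n \<ge> Suc k \<and> real (card (Good \<inter> {a..<a+n})) < c * real n"
    using cN by auto
  then obtain a n where an: "\<And>k. n k \<ge> Suc k" "\<And>k. real (card (Good \<inter> {a k..<a k + n k})) < c * real (n k)"
    by metis
  define F where "F = {p \<in> Z. dist (fst p) (snd p) \<ge> \<epsilon>}"
  have Fc: "closed F"
  proof -
    have "closed {p :: 'a \<times> 'a. dist (fst p) (snd p) \<ge> \<epsilon>}"
      by (intro closed_Collect_le continuous_intros)
    moreover have "closed Z" using B(1) by (rule compact_imp_closed)
    ultimately have "closed (Z \<inter> {p. dist (fst p) (snd p) \<ge> \<epsilon>})" by (rule closed_Int[rotated])
    moreover have "Z \<inter> {p. dist (fst p) (snd p) \<ge> \<epsilon>} = F" unfolding F_def by auto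
    ultimately show ?thesis by simp
  qed
  have FZ: "F \<subseteq> Z" unfolding F_def by auto
  define \<delta> where "\<delta> = 1 - c"
  have \<delta>pos: "\<delta> > 0" unfolding \<delta>_def using c by simp
  have wZ: "w m \<in> Z" for m unfolding w_def by (rule B(5))
  have wS: "S (w m) = w (Suc m)" for m unfolding S_def w_def by simp
  have cnt: "\<delta> * real (n k) \<le> real (card {m \<in> {a k..<a k + n k}. w m \<in> F})" for k
  proof -
    define I where "I = {a k..<a k + n k}"
    have "{m \<in> I. w m \<in> F} = I - Good" unfolding F_def Good_def w_def using wZ[unfolded w_def] by auto
    then have "card {m \<in> I. w m \<in> F} = card I - card (I \<inter> Good)"
      using card_Diff_subset_Int[of I Good] unfolding I_def by simp
    moreover have "card (I \<inter> Good) \<le> card I" unfolding I_def by (intro card_mono) auto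
    ultimately have "real (card {m \<in> I. w m \<in> F}) = real (n k) - real (card (Good \<inter> I))"
      unfolding I_def by (simp add: Int_commute of_nat_diff)
    then show ?thesis using an(2)[of k] unfolding I_def \<delta>_def by (simp add: algebra_simps)
  qed
  obtain \<mu> where \<mu>ps: "prob_space \<mu>" and s\<mu>: "sets \<mu> = sets (restrict_space borel Z)"
    and S\<mu>: "S \<in> measurable \<mu> \<mu>" and inv: "\<forall>A\<in>sets \<mu>. emeasure \<mu> (S -` A \<inter> Z) = emeasure \<mu> A"
    and mF: "measure \<mu> F \<ge> \<delta>"
    using KB[OF B(1) B(3)[folded S_def] B(4)[folded S_def] wZ wS an(1) Fc FZ cnt] by blast
  interpret \<mu>: prob_space \<mu> by (rule \<mu>ps)
  have \<mu>inv: "\<mu> \<in> inv_measures Z S" unfolding inv_measures_def using \<mu>ps s\<mu> S\<mu> inv by blast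
  define \<C> where "\<C> = {C. closed C \<and> C \<subseteq> Z \<and> (\<forall>\<mu>\<in>inv_measures Z S. emeasure \<mu> C = 1)}"
  have suppeq: "supp_sys Z S = \<Inter>\<C>" unfolding supp_sys_def \<C>_def ..
  have FD: "F \<inter> \<Inter>\<C> = {}"
  proof -
    have "F \<inter> {(z, z) | z. z \<in> X} = {}" unfolding F_def using \<epsilon> by auto
    moreover have "\<Inter>\<C> \<subseteq> {(z, z) | z. z \<in> X}" using supp suppeq unfolding S_def by simp
    ultimately have "F \<inter> \<Inter>\<C> \<subseteq> F \<inter> {(z, z) | z. z \<in> X}" by (intro Int_mono subset_refl)
    also have "\<dots> = {}" by fact
    finally show ?thesis by (simp only: subset_empty)
  qed
  have cF: "compact F"
  proof -
    have "compact (Z \<inter> F)" by (rule compact_Int_closed[OF B(1) Fc])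
    moreover have "Z \<inter> F = F" using FZ by blast
    ultimately show ?thesis by simp
  qed
  have "F \<subseteq> \<Union> (uminus ` \<C>)" using FD by blast
  moreover have "\<forall>U\<in>uminus ` \<C>. open U" unfolding \<C>_def by (auto simp: open_Compl)
  ultimately obtain \<C>' where C': "\<C>' \<subseteq> uminus ` \<C>" "finite \<C>'" "F \<subseteq> \<Union>\<C>'"
    using compactE[OF cF] by metis
  have AEC: "AE z in \<mu>. z \<in> C" if "C \<in> \<C>" for C
  proof -
    have "emeasure \<mu> C = 1" using that \<mu>inv unfolding \<C>_def by blast
    then have "measure \<mu> C = 1" by (simp add: \<mu>.emeasure_eq_measure)
    then show ?thesis by (rule \<mu>.AE_prob_1)
  qed
  have "AE z in \<mu>. \<forall>U\<in>\<C>'. z \<notin> U"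
  proof (subst AE_finite_all[OF C'(2)], intro ballI)
    fix U assume "U \<in> \<C>'"
    then obtain C where "C \<in> \<C>" "U = - C" using C'(1) by blast
    then show "AE z in \<mu>. z \<notin> U" using AEC[of C] by simp
  qed
  then have "AE z in \<mu>. z \<notin> F" by (rule eventually_mono) (use C'(3) in blast)
  moreover have FS: "F \<in> sets \<mu>" unfolding s\<mu> using FZ Fc B(1)
    by (subst sets_restrict_space_iff) (auto intro: borel_closed compact_imp_closed)
  ultimately have "F \<in> null_sets \<mu>" using AE_iff_null_sets by blast
  then have "measure \<mu> F = 0" by (simp add: \<mu>.emeasure_eq_measure null_sets_def)
  then show False using mF \<delta>pos by simp
qed



lemma card_bad_le:
  fixes Good :: "nat set"
  shows "real (card ({..<n} - Good)) = real n - real (card (Good \<inter> {0..<n}))"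
proof -
  have "card ({..<n} - Good) = card {..<n} - card ({..<n} \<inter> Good)"
    by (rule card_Diff_subset_Int) simp
  moreover have "card ({..<n} \<inter> Good) \<le> card {..<n}" by (intro card_mono) auto
  moreover have "{..<n} \<inter> Good = Good \<inter> {0..<n}" by auto
  ultimately show ?thesis by (simp add: of_nat_diff)
qed

lemma bpset_imp_supp:
  fixes X :: "'a::metric_space set" and T :: "'a \<Rightarrow> 'a" and x y :: 'a
  assumes tds: "tds X T" and x: "x \<in> X" and y: "y \<in> X"
  defines "Z \<equiv> closure {((T ^^ n) x, (T ^^ n) y) | n. True}"
  assumes ZBP: "Z \<subseteq> BP X T"
  shows "supp_sys Z (map_prod T T) \<subseteq> {(z, z) | z. z \<in> X}"
proof -
  note B = basic[OF tds x y, folded Z_def]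
  define S where "S = map_prod T T"
  have SZ: "S z \<in> Z" if "z \<in> Z" for z using B(4) that unfolding S_def by blast
  have SmZ: "(S ^^ m) z \<in> Z" if "z \<in> Z" for z m using that by (induction m) (auto intro: SZ)
  have Zcl: "closed Z" using B(1) by (rule compact_imp_closed)
  define C0 where "C0 = Z \<inter> {p. fst p = snd p}"
  have C0c: "closed C0" unfolding C0_def
    by (intro closed_Int Zcl closed_Collect_eq continuous_intros)
  have C0Z: "C0 \<subseteq> Z" unfolding C0_def by auto
  have full: "emeasure \<mu> C0 = 1" if \<mu>inv: "\<mu> \<in> inv_measures Z S" for \<mu>
  proof -
    have \<mu>ps: "prob_space \<mu>" and s\<mu>: "sets \<mu> = sets (restrict_space borel Z)"
      and S\<mu>: "S \<in> measurable \<mu> \<mu>" and inv: "\<And>A. A \<in> sets \<mu> \<Longrightarrow> emeasure \<mu> (S -` A \<inter> Z) = emeasure \<mu> A"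
      using \<mu>inv unfolding inv_measures_def by auto
    interpret \<mu>: prob_space \<mu> by (rule \<mu>ps)
    have sp\<mu>: "space \<mu> = Z" using sets_eq_imp_space_eq[OF s\<mu>] by (simp add: space_restrict_space)
    have closed_sets: "A \<in> sets \<mu>" if "closed A" "A \<subseteq> Z" for A
      unfolding s\<mu> using that Zcl by (subst sets_restrict_space_iff) auto
    have Sm: "(S ^^ m) \<in> measurable \<mu> \<mu>" for m
    proof (induction m)
      case 0 then show ?case by simp
    next
      case (Suc m)
      have "S \<circ> (S ^^ m) \<in> measurable \<mu> \<mu>" by (rule measurable_comp[OF Suc S\<mu>])
      then show ?case by (simp only: funpow.simps)
    qed
    have zero: "emeasure \<mu> {p \<in> Z. dist (fst p) (snd p) \<ge> \<epsilon>} = 0" if \<epsilon>: "\<epsilon> > 0" for \<epsilon>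
    proof -
      define F where "F = {p \<in> Z. dist (fst p) (snd p) \<ge> \<epsilon>}"
      have Fc: "closed F"
      proof -
        have "closed (Z \<inter> {p. dist (fst p) (snd p) \<ge> \<epsilon>})"
          by (intro closed_Int Zcl closed_Collect_le continuous_intros)
        moreover have "Z \<inter> {p. dist (fst p) (snd p) \<ge> \<epsilon>} = F" unfolding F_def by auto
        ultimately show ?thesis by simp
      qed
      have FS: "F \<in> sets \<mu>" by (rule closed_sets[OF Fc]) (auto simp: F_def)
      define Bm where "Bm m = (S ^^ m) -` F \<inter> Z" for m
      have BS: "Bm m \<in> sets \<mu>" for m
        unfolding Bm_def using measurable_sets[OF Sm FS] sp\<mu> by simp
      have Beq: "emeasure \<mu> (Bm m) = emeasure \<mu> F" for m
      proof (induction m)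
        case 0 then show ?case unfolding Bm_def F_def by (simp add: Int_absorb2)
      next
        case (Suc m)
        have "Bm (Suc m) = S -` (Bm m) \<inter> Z"
          unfolding Bm_def using SZ by (auto simp: funpow_Suc_right simp del: funpow.simps)
        then have "emeasure \<mu> (Bm (Suc m)) = emeasure \<mu> (Bm m)" using inv[OF BS[of m]] by simp
        then show ?case using Suc by simp
      qed
      have Bmeas: "measure \<mu> (Bm m) = measure \<mu> F" for m
        using Beq[of m] by (simp add: \<mu>.emeasure_eq_measure)
      define Avg where "Avg n z = (\<Sum>m<n. indicator (Bm m) z) / real n" for n z
      have intAvg: "(\<integral>z. Avg (Suc n) z \<partial>\<mu>) = measure \<mu> F" for n
      proof -
        have "(\<integral>z. (\<Sum>m<Suc n. indicator (Bm m) z :: real) \<partial>\<mu>) = (\<Sum>m<Suc n. \<integral>z. indicator (Bm m) z \<partial>\<mu>)"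
          by (rule Bochner_Integration.integral_sum[where I="{..<Suc n}" and f="\<lambda>m. indicator (Bm m) :: _ \<Rightarrow> real"]) (auto intro!: integrable_real_indicator BS simp: \<mu>.emeasure_eq_measure)
        also have "\<dots> = (\<Sum>m<Suc n. measure \<mu> F)"
          by (intro sum.cong refl) (simp add: BS Bmeas)
        finally show ?thesis unfolding Avg_def by simp
      qed
      have Avg_lim: "(\<lambda>n. Avg n z) \<longlonglongrightarrow> 0" if zZ: "z \<in> Z" for z
      proof -
        obtain u v where z: "z = (u, v)" by fastforce
        have bp: "banach_proximal T u v" using ZBP zZ unfolding z BP_def by auto
        then have bd: "banach_density_one {n. dist ((T ^^ n) u) ((T ^^ n) v) < \<epsilon>}"
          unfolding banach_proximal_def using \<epsilon> by blast
        define Good where "Good = {n. dist ((T ^^ n) u) ((T ^^ n) v) < \<epsilon>}"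
        have ind: "indicator (Bm m) z = (if m \<in> Good then 0 else 1 :: real)" for m
        proof -
          have "(S ^^ m) z \<in> Z" by (rule SmZ[OF zZ])
          then show ?thesis unfolding Bm_def F_def Good_def S_def z using zZ[unfolded z]
            by (auto simp: funpow_map_prod indicator_def not_less)
        qed
        have sumeq: "(\<Sum>m<n. indicator (Bm m) z :: real) = real (card ({..<n} - Good))" for n
        proof -
          have "(\<Sum>m<n. indicator (Bm m) z :: real) = (\<Sum>m<n. if m \<in> Good then 0 else 1)"
            by (simp add: ind)
          also have "\<dots> = (\<Sum>m\<in>{..<n} - Good. 1)"
            by (subst sum.If_cases) (auto simp: Diff_eq)
          finally show ?thesis by simp
        qed
        show ?thesis
        proof (rule LIMSEQ_I)
          fix r :: real assume r: "r > 0"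
          obtain N where N: "N \<ge> 1" "\<forall>a n. n \<ge> N \<longrightarrow> real (card (Good \<inter> {a..<a+n})) \<ge> (1 - r/2) * real n"
          proof -
            have "1 - r/2 < 1" using r by simp
            then show ?thesis using bd that unfolding banach_density_one_def Good_def by blast
          qed
          show "\<exists>no. \<forall>n\<ge>no. norm (Avg n z - 0) < r"
          proof (intro exI[of _ N] allI impI)
            fix n assume n: "N \<le> n"
            have c: "real (card (Good \<inter> {0..<n})) \<ge> (1 - r/2) * real n" using N(2)[rule_format, of n 0] n by simp
            have npos: "real n > 0" using n N(1) by simp
            have "Avg n z = (real n - real (card (Good \<inter> {0..<n}))) / real n"
              unfolding Avg_def sumeq card_bad_le ..
            moreover have "0 \<le> (real n - real (card (Good \<inter> {0..<n})))"
              using card_mono[of "{0..<n}" "Good \<inter> {0..<n}"] by simp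
            moreover have "(real n - real (card (Good \<inter> {0..<n}))) \<le> r/2 * real n"
              using c by (simp add: algebra_simps)
            ultimately have "\<bar>Avg n z\<bar> \<le> r/2" using npos by (simp add: divide_le_eq)
            then show "norm (Avg n z - 0) < r" using r by simp
          qed
        qed
      qed
      have "(\<lambda>n. \<integral>z. Avg n z \<partial>\<mu>) \<longlonglongrightarrow> (\<integral>z. 0 \<partial>\<mu>)"
      proof (rule integral_dominated_convergence[where w="\<lambda>_. 1"])
        show "(\<lambda>z. 0::real) \<in> borel_measurable \<mu>" by simp
        show "(\<lambda>z. Avg n z) \<in> borel_measurable \<mu>" for n unfolding Avg_def using BS by measurable
        show "integrable \<mu> (\<lambda>_. 1::real)" by simp
        show "AE z in \<mu>. (\<lambda>n. Avg n z) \<longlonglongrightarrow> 0"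
          by (rule AE_I2) (use Avg_lim sp\<mu> in auto)
        show "AE z in \<mu>. norm (Avg n z) \<le> 1" for n
        proof (rule AE_I2)
          fix z
          have "0 \<le> (\<Sum>m<n. indicator (Bm m) z :: real)" by (simp add: sum_nonneg)
          moreover have "(\<Sum>m<n. indicator (Bm m) z :: real) \<le> (\<Sum>m<n. 1)" by (intro sum_mono) (simp add: indicator_def)
          ultimately show "norm (Avg n z) \<le> 1" unfolding Avg_def
            by (cases "n = 0") (auto simp: divide_le_eq)
        qed
      qed
      then have "(\<lambda>n. \<integral>z. Avg n z \<partial>\<mu>) \<longlonglongrightarrow> 0" by simp
      then have "(\<lambda>n. \<integral>z. Avg (Suc n) z \<partial>\<mu>) \<longlonglongrightarrow> 0" by (rule LIMSEQ_Suc)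
      then have "(\<lambda>n. measure \<mu> F) \<longlonglongrightarrow> 0" unfolding intAvg .
      then have "measure \<mu> F = 0" by (simp add: LIMSEQ_const_iff)
      then show ?thesis unfolding F_def[symmetric] by (simp add: \<mu>.emeasure_eq_measure)
    qed
    define Fj where "Fj j = {p \<in> Z. dist (fst p) (snd p) \<ge> 1 / real (Suc j)}" for j
    have FjS: "Fj j \<in> sets \<mu>" for j
    proof (rule closed_sets)
      have "closed (Z \<inter> {p. dist (fst p) (snd p) \<ge> 1 / real (Suc j)})"
        by (intro closed_Int Zcl closed_Collect_le continuous_intros)
      moreover have "Z \<inter> {p. dist (fst p) (snd p) \<ge> 1 / real (Suc j)} = Fj j" unfolding Fj_def by auto
      ultimately show "closed (Fj j)" by simp
      show "Fj j \<subseteq> Z" unfolding Fj_def by auto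
    qed
    have "Z - C0 = (\<Union>j. Fj j)"
    proof
      show "Z - C0 \<subseteq> (\<Union>j. Fj j)"
      proof
        fix p assume p: "p \<in> Z - C0"
        then have "dist (fst p) (snd p) > 0" unfolding C0_def by auto
        then obtain j where "1 / real (Suc j) < dist (fst p) (snd p)"
          by (metis reals_Archimedean inverse_eq_divide)
        then have "p \<in> Fj j" using p unfolding Fj_def by auto
        then show "p \<in> (\<Union>j. Fj j)" by blast
      qed
      show "(\<Union>j. Fj j) \<subseteq> Z - C0"
        unfolding Fj_def C0_def by auto
    qed
    moreover have "(\<Union>j. Fj j) \<in> null_sets \<mu>"
      using zero FjS unfolding Fj_def by (intro null_sets_UN) (auto simp: null_sets_def)
    ultimately have "Z - C0 \<in> null_sets \<mu>" by simp
    then have "measure \<mu> (Z - C0) = 0" by (simp add: \<mu>.emeasure_eq_measure null_sets_def)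
    moreover have C0S: "C0 \<in> sets \<mu>" by (rule closed_sets[OF C0c C0Z])
    moreover have "measure \<mu> (Z - C0) = 1 - measure \<mu> C0"
      using \<mu>.prob_compl[OF C0S] sp\<mu> by simp
    ultimately have "measure \<mu> C0 = 1" by simp
    then show ?thesis by (simp add: \<mu>.emeasure_eq_measure)
  qed
  have "supp_sys Z S \<subseteq> C0" unfolding supp_sys_def
    by (rule Inter_lower) (use C0c C0Z full in blast)
  also have "C0 \<subseteq> {(z, z) | z. z \<in> X}" unfolding C0_def using B(2) by force
  finally show ?thesis unfolding S_def .
qed



lemma bp_imp_bpset:
  fixes X :: "'a::metric_space set" and T :: "'a \<Rightarrow> 'a" and x y :: 'a
  assumes tds: "tds X T" and x: "x \<in> X" and y: "y \<in> X"
  defines "Z \<equiv> closure {((T ^^ n) x, (T ^^ n) y) | n. True}"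
  assumes bp: "banach_proximal T x y"
  shows "Z \<subseteq> BP X T"
proof
  note B = basic[OF tds x y, folded Z_def]
  have Tc: "continuous_on X T" and TX: "T ` X \<subseteq> X" using tds unfolding tds_def by auto
  fix p assume pZ: "p \<in> Z"
  obtain u v where p: "p = (u, v)" by fastforce
  have u: "u \<in> X" and v: "v \<in> X" using B(2) pZ p by auto
  have "banach_proximal T u v"
    unfolding banach_proximal_def
  proof (intro allI impI)
    fix \<epsilon> :: real assume \<epsilon>: "\<epsilon> > 0"
    define Gd where "Gd = {n. dist ((T ^^ n) u) ((T ^^ n) v) < \<epsilon>}"
    define Gd' where "Gd' = {n. dist ((T ^^ n) x) ((T ^^ n) y) < \<epsilon>/2}"
    have e2: "\<epsilon>/2 > 0" using \<epsilon> by simp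
    have bd': "banach_density_one Gd'" using bp e2 unfolding banach_proximal_def Gd'_def by blast
    show "banach_density_one {n. dist ((T ^^ n) u) ((T ^^ n) v) < \<epsilon>}"
      unfolding Gd_def[symmetric] banach_density_one_def
    proof (intro allI impI)
      fix c :: real assume c: "c < 1"
      obtain N where N: "N \<ge> 1" "\<And>a n. n \<ge> N \<Longrightarrow> real (card (Gd' \<inter> {a..<a+n})) \<ge> c * real n"
        using bd' c unfolding banach_density_one_def by blast
      show "\<exists>N\<ge>1. \<forall>a n. n \<ge> N \<longrightarrow> c * real n \<le> real (card (Gd \<inter> {a..<a+n}))"
      proof (intro exI[of _ N] conjI allI impI N(1))
        fix a n assume n: "n \<ge> N"
        define L where "L = a + n"
        obtain q where q: "\<And>j. j < L \<Longrightarrow> dist ((T ^^ j) ((T ^^ q) x)) ((T ^^ j) u) < \<epsilon>/4"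
          "\<And>j. j < L \<Longrightarrow> dist ((T ^^ j) ((T ^^ q) y)) ((T ^^ j) v) < \<epsilon>/4"
        proof -
          obtain s where s: "\<And>i. s i \<in> {((T ^^ n) x, (T ^^ n) y) | n. True}" "s \<longlonglongrightarrow> p"
            using pZ unfolding Z_def closure_sequential by blast
          have "\<forall>i. \<exists>k. s i = ((T ^^ k) x, (T ^^ k) y)" using s(1) by blast
          from choice[OF this] obtain qs where qs: "\<And>i. s i = ((T ^^ qs i) x, (T ^^ qs i) y)"
            by blast
          have fs: "(\<lambda>i. (T ^^ qs i) x) \<longlonglongrightarrow> u" and ss: "(\<lambda>i. (T ^^ qs i) y) \<longlonglongrightarrow> v"
            using tendsto_fst[OF s(2)] tendsto_snd[OF s(2)] unfolding p qs by simp_all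
          have ev: "eventually (\<lambda>i. \<forall>j\<in>{..<L}. dist ((T ^^ j) ((T ^^ qs i) x)) ((T ^^ j) u) < \<epsilon>/4 \<and>
                        dist ((T ^^ j) ((T ^^ qs i) y)) ((T ^^ j) v) < \<epsilon>/4) sequentially"
          proof (rule eventually_ball_finite, simp, intro ballI)
            fix j
            have cj: "continuous_on X (T ^^ j)" by (rule funpow_cont[OF Tc TX])
            have l1: "(\<lambda>i. (T ^^ j) ((T ^^ qs i) x)) \<longlonglongrightarrow> (T ^^ j) u"
              by (rule continuous_on_tendsto_compose[OF cj fs u])
                 (simp add: funpow_mapsto[OF TX x])
            have l2: "(\<lambda>i. (T ^^ j) ((T ^^ qs i) y)) \<longlonglongrightarrow> (T ^^ j) v"
              by (rule continuous_on_tendsto_compose[OF cj ss v])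
                 (simp add: funpow_mapsto[OF TX y])
            have e4: "\<epsilon>/4 > 0" using \<epsilon> by simp
            show "eventually (\<lambda>i. dist ((T ^^ j) ((T ^^ qs i) x)) ((T ^^ j) u) < \<epsilon>/4 \<and>
                        dist ((T ^^ j) ((T ^^ qs i) y)) ((T ^^ j) v) < \<epsilon>/4) sequentially"
              using tendstoD[OF l1 e4] tendstoD[OF l2 e4] by (rule eventually_conj)
          qed
          then obtain i where "\<forall>j\<in>{..<L}. dist ((T ^^ j) ((T ^^ qs i) x)) ((T ^^ j) u) < \<epsilon>/4 \<and>
                        dist ((T ^^ j) ((T ^^ qs i) y)) ((T ^^ j) v) < \<epsilon>/4"
            by (auto simp: eventually_sequentially)
          then show ?thesis by (intro that[of "qs i"]) auto
        qed
        have good: "m \<in> Gd" if m: "m \<in> {a..<a+n}" and mq: "q + m \<in> Gd'" for m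
        proof -
          have mL: "m < L" using m unfolding L_def by simp
          have ex: "(T ^^ m) ((T ^^ q) x) = (T ^^ (q + m)) x" and ey: "(T ^^ m) ((T ^^ q) y) = (T ^^ (q + m)) y"
            by (simp_all add: funpow_add add.commute[of q m])
          have d1: "dist ((T ^^ (q + m)) x) ((T ^^ m) u) < \<epsilon>/4" using q(1)[OF mL] ex by simp
          have d2: "dist ((T ^^ (q + m)) y) ((T ^^ m) v) < \<epsilon>/4" using q(2)[OF mL] ey by simp
          have d3: "dist ((T ^^ (q + m)) x) ((T ^^ (q + m)) y) < \<epsilon>/2" using mq unfolding Gd'_def by simp
          have "dist ((T ^^ m) u) ((T ^^ m) v) \<le> dist ((T ^^ m) u) ((T ^^ (q + m)) x) +
                  dist ((T ^^ (q + m)) x) ((T ^^ (q + m)) y) + dist ((T ^^ (q + m)) y) ((T ^^ m) v)"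
            using dist_triangle[of "(T ^^ m) u" "(T ^^ m) v" "(T ^^ (q + m)) x"]
              dist_triangle[of "(T ^^ (q + m)) x" "(T ^^ m) v" "(T ^^ (q + m)) y"] by linarith
          then have "dist ((T ^^ m) u) ((T ^^ m) v) < \<epsilon>" using d1 d2 d3 by (simp add: dist_commute)
          then show ?thesis unfolding Gd_def by simp
        qed
        have "card (Gd' \<inter> {q + a..<q + a + n}) \<le> card (Gd \<inter> {a..<a+n})"
        proof (rule card_inj_on_le[where f="\<lambda>t. t - q"])
          show "inj_on (\<lambda>t. t - q) (Gd' \<inter> {q + a..<q + a + n})" by (auto simp: inj_on_def)
          show "(\<lambda>t. t - q) ` (Gd' \<inter> {q + a..<q + a + n}) \<subseteq> Gd \<inter> {a..<a+n}"
          proof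
            fix t assume "t \<in> (\<lambda>t. t - q) ` (Gd' \<inter> {q + a..<q + a + n})"
            then obtain s where s: "s \<in> Gd'" "s \<in> {q + a..<q + a + n}" "t = s - q" by blast
            have "t \<in> {a..<a+n}" using s by auto
            moreover have "q + t \<in> Gd'" using s by (simp add: le_add_diff_inverse)
            ultimately show "t \<in> Gd \<inter> {a..<a+n}" using good by blast
          qed
          show "finite (Gd \<inter> {a..<a+n})" by simp
        qed
        moreover have "real (card (Gd' \<inter> {q + a..<q + a + n})) \<ge> c * real n" using N(2)[OF n] .
        ultimately show "c * real n \<le> real (card (Gd \<inter> {a..<a+n}))" by linarith
      qed
    qed
  qed
  then show "p \<in> BP X T" unfolding BP_def p using u v by simp
qed


theorem mainTheorem9:
  fixes X :: "'a::metric_space set" and T :: "'a \<Rightarrow> 'a" and x y :: 'a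
  assumes "tds X T" and "x \<in> X" and "y \<in> X"
  defines "Z \<equiv> closure {((T ^^ n) x, (T ^^ n) y) | n. True}"
  shows "(banach_proximal T x y \<longleftrightarrow> supp_sys Z (map_prod T T) \<subseteq> {(z, z) | z. z \<in> X})
       \<and> (supp_sys Z (map_prod T T) \<subseteq> {(z, z) | z. z \<in> X} \<longleftrightarrow> Z \<subseteq> BP X T)"
proof -
  have a: "banach_proximal T x y \<Longrightarrow> Z \<subseteq> BP X T"
    unfolding Z_def by (rule bp_imp_bpset[OF \<open>tds X T\<close> \<open>x \<in> X\<close> \<open>y \<in> X\<close>])
  have b: "Z \<subseteq> BP X T \<Longrightarrow> supp_sys Z (map_prod T T) \<subseteq> {(z, z) | z. z \<in> X}"
    unfolding Z_def by (rule bpset_imp_supp[OF \<open>tds X T\<close> \<open>x \<in> X\<close> \<open>y \<in> X\<close>])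
  have c: "supp_sys Z (map_prod T T) \<subseteq> {(z, z) | z. z \<in> X} \<Longrightarrow> banach_proximal T x y"
    unfolding Z_def by (rule supp_imp_bp[OF \<open>tds X T\<close> \<open>x \<in> X\<close> \<open>y \<in> X\<close>])
  show ?thesis using a b c by blast
qed

end
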